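(* Let $n>p\ge 2$ and consider the linear model $\mathbf{y}=\mathbf{X}\boldsymbol{\beta}+\boldsymbol{\varepsilon}$, where $\mathbf{X}=[\mathbf{x}_1,\dots,\mathbf{x}_p]$ is a known $n\times p$ matrix with linearly independent columns, each column having mean $0$ and Euclidean length $1$, $\boldsymbol{\beta}=(\beta_1,\dots,\beta_p)^T$ is unknown, and $E(\boldsymbol{\varepsilon})=\mathbf{0}$, $\mathrm{var}(\boldsymbol{\varepsilon})=\mathbf{I}$. Suppose there is a constant $r>0$ with $\mathrm{corr}(\mathbf{x}_i,\mathbf{x}_j)=r$ for all $i\ne j$. Let $\hat{\boldsymbol{\beta}}=(\mathbf{X}^T\mathbf{X})^{-1}\mathbf{X}^T\mathbf{y}$, and for $\mathbf{w}$ in the simplex $W=\{\mathbf{w}\in\mathbb{R}^p: w_i\ge0,\ \sum_i w_i=1\}$ write $\mathrm{var}(\hat{\xi}(\mathbf{w}),r)$ for the variance of $\mathbf{w}^T\hat{\boldsymbol{\beta}}$ (which depends only on $p$, $r$ and $\mathbf{w}$). Let $\mathbf{w}_j\in W$ be the $j$-th standard basis vector, so that $\mathbf{w}_j^T\hat{\boldsymbol{\beta}}=\hat\beta_j$. Then for each fixed $r$, $$\mathrm{var}(\hat{\beta}_j,r)=\mathrm{var}(\hat{\xi}(\mathbf{w}_j),r)=\max_{\mathbf{w}\in W}\mathrm{var}(\hat{\xi}(\mathbf{w}),r).$$ Further, $\mathrm{var}(\hat{\beta}_j,r)$, viewed as a function of $r\in(0,1)$, is strictly monotone increasing and $\lim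_{r\to1}\mathrm{var}(\hat{\beta}_j,r)=+\infty$.
   Context: The variance of $\mathbf{w}^T\hat{\boldsymbol\beta}$ in this model equals $\mathbf{w}^T(\mathbf{X}^T\mathbf{X})^{-1}\mathbf{w}$, where $\mathbf{X}^T\mathbf{X}$ has $1$ on the diagonal and $r$ off the diagonal; hence it is a function of $p$, $r$ and $\mathbf{w}$ only. *)

theory Defs
  imports "HOL-Analysis.Analysis"
begin

definition vmean :: "real^'n \<Rightarrow> real" where
  "vmean x = (\<Sum>k\<in>UNIV. x $ k) / real CARD('n)"

definition corr :: "real^'n \<Rightarrow> real^'n \<Rightarrow> real" where
  "corr x y = (\<Sum>k\<in>UNIV. (x $ k - vmean x) * (y $ k - vmean y)) /
     sqrt ((\<Sum>k\<in>UNIV. (x $ k - vmean x)^2) * (\<Sum>k\<in>UNIV. (y $ k - vmean y)^2))"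

definition simplex_W :: "(real^'p) set" where
  "simplex_W = {w. (\<forall>i. w $ i \<ge> 0) \<and> (\<Sum>i\<in>UNIV. w $ i) = 1}"

text \<open>Variance of w^T betahat in the model y = X beta + eps, var(eps) = I:
  var(w^T (X^T X)^{-1} X^T y) = w^T (X^T X)^{-1} w.\<close>
definition var_xi_X :: "real^'p^'n \<Rightarrow> real^'p \<Rightarrow> real" where
  "var_xi_X X w = w \<bullet> (matrix_inv (transpose X ** X) *v w)"

definition equicorr :: "real \<Rightarrow> real^'p^'p" where
  "equicorr r = (\<chi> i j. if i = j then 1 else r)"

definition var_xi :: "real^'p \<Rightarrow> real \<Rightarrow> real" where
  "var_xi w r = w \<bullet> (matrix_inv (equicorr r :: real^'p^'p) *v w)"

end

theory Submission
  imports Defs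
begin

lemma matrix_inv_eqI:
  fixes A B :: "real^'n^'n"
  assumes "A ** B = mat 1" "B ** A = mat 1"
  shows "matrix_inv A = B"
proof -
  let ?C = "matrix_inv A"
  have c: "A ** ?C = mat 1 \<and> ?C ** A = mat 1"
    unfolding matrix_inv_def by (rule someI[of _ B]) (use assms in auto)
  have "?C = ?C ** (A ** B)" using assms by simp
  also have "\<dots> = (?C ** A) ** B" by (simp add: matrix_mul_assoc)
  also have "\<dots> = B" using c by simp
  finally show ?thesis .
qed

lemma sum_if_const:
  fixes i :: "'p::finite"
  shows "(\<Sum>l\<in>UNIV. (if i = l then 1 else s) :: real) = 1 + s * (real CARD('p) - 1)"
proof -
  have "(\<Sum>l\<in>UNIV. (if i = l then 1 else s) :: real) = (\<Sum>l\<in>UNIV. s + (if i = l then 1 - s else 0))"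
    by (rule sum.cong) auto
  also have "\<dots> = s * real CARD('p) + (1 - s)" by (simp add: sum.distrib)
  finally show ?thesis by (simp add: algebra_simps)
qed

definition invB :: "real \<Rightarrow> real^'p^'p" where
  "invB s = (\<chi> i. (\<chi> k. (if i = k then 1/(1-s) else 0) - s/((1 - s) * (1 + (real CARD('p) - 1) * s))))"

lemma equicorr_inv:
  assumes "s \<noteq> 1" "1 + (real CARD('p) - 1) * s \<noteq> 0"
  shows "matrix_inv (equicorr s :: real^'p^'p) = invB s"
proof (rule matrix_inv_eqI)
  define a where "a = 1/(1-s)"
  define b where "b = - s/((1 - s) * (1 + (real CARD('p) - 1) * s))"
  have n1: "1 - s \<noteq> 0" using assms by auto
  have n2: "1 + s * (real CARD('p) - 1) \<noteq> 0" using assms by (simp add: mult.commute)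
  have key1: "(1-s)*a = 1" using n1 unfolding a_def by simp
  define c where "c = 1 + s * (real CARD('p) - 1)"
  have bc: "b = - s / ((1 - s) * c)" unfolding b_def c_def by (simp add: mult.commute)
  have "b * c = - s * a"
  proof -
    have cne: "c \<noteq> 0" using n2 c_def by simp
    have "b * c = - s / (1 - s) * (c / c)" unfolding bc by simp
    also have "\<dots> = - s * a" using cne unfolding a_def by simp
    finally show ?thesis .
  qed
  then have "b * (1 + s * (real CARD('p) - 1)) = - s * a" by (simp add: c_def)
  then have key2: "b * (1 + s * (real CARD('p) - 1)) + s * a = 0" by simp
  note key = key1 key2
  have inv: "invB s = ((\<chi> i. (\<chi> k. (if i = k then a else 0) + b)) :: real^'p^'p)"
    unfolding invB_def a_def b_def by (simp add: vec_eq_iff)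
  have s1: "(\<Sum>l\<in>UNIV. (if i = l then 1 else s) * b) = b * (1 + s * (real CARD('p) - 1))" for i :: 'p
  proof -
    have "(\<Sum>l\<in>UNIV. (if i = l then 1 else s) * b) = (\<Sum>l\<in>UNIV. (if i = l then 1 else s)) * b"
      by (simp only: sum_distrib_right)
    then show ?thesis by (simp only: sum_if_const mult.commute)
  qed
  show "equicorr s ** invB s = (mat 1 :: real^'p^'p)"
    unfolding vec_eq_iff
  proof (intro allI)
    fix i k :: 'p
    have "(\<Sum>l\<in>UNIV. (if i = l then 1 else s) * ((if l = k then a else 0) + b))
       = (\<Sum>l\<in>UNIV. (if i = l then 1 else s) * b + (if l = k then (if i = k then 1 else s) * a else 0))"
      by (rule sum.cong) (auto simp: algebra_simps)
    also have "\<dots> = b * (1 + s * (real CARD('p) - 1)) + (if i = k then 1 else s) * a"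
      by (simp only: sum.distrib s1) simp
    also have "\<dots> = (if i = k then 1 else 0)" using key by (auto simp: algebra_simps)
    finally show "(equicorr s ** invB s) $ i $ k = (mat 1 :: real^'p^'p) $ i $ k"
      by (simp add: inv matrix_matrix_mult_def equicorr_def mat_def)
  qed
  show "invB s ** equicorr s = (mat 1 :: real^'p^'p)"
    unfolding vec_eq_iff
  proof (intro allI)
    fix i k :: 'p
    have "(\<Sum>l\<in>UNIV. ((if i = l then a else 0) + b) * (if l = k then 1 else s))
       = (\<Sum>l\<in>UNIV. (if k = l then 1 else s) * b + (if l = i then (if i = k then 1 else s) * a else 0))"
      by (rule sum.cong) (auto simp: algebra_simps)
    also have "\<dots> = b * (1 + s * (real CARD('p) - 1)) + (if i = k then 1 else s) * a"
      by (simp only: sum.distrib s1) simp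
    also have "\<dots> = (if i = k then 1 else 0)" using key by (auto simp: algebra_simps)
    finally show "(invB s ** equicorr s) $ i $ k = (mat 1 :: real^'p^'p) $ i $ k"
      by (simp add: inv matrix_matrix_mult_def equicorr_def mat_def)
  qed
qed


lemma qf:
  fixes w :: "real^'p"
  shows "w \<bullet> (((\<chi> i. (\<chi> k. (if i = k then a else 0) + b)) :: real^'p^'p) *v w)
     = a * (w \<bullet> w) + b * (\<Sum>i\<in>UNIV. w $ i)^2"
proof -
  define S where "S = (\<Sum>i\<in>UNIV. w $ i)"
  have e: "(((\<chi> i. (\<chi> k. (if i = k then a else 0) + b)) :: real^'p^'p) *v w) $ i = a * w $ i + b * S" for i
  proof -
    have "(((\<chi> i. (\<chi> k. (if i = k then a else 0) + b)) :: real^'p^'p) *v w) $ i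
       = (\<Sum>k\<in>UNIV. (if i = k then a * w $ k else 0) + b * w $ k)"
      by (simp add: matrix_vector_mult_def) (rule sum.cong, auto simp: algebra_simps)
    also have "\<dots> = a * w $ i + b * S" by (simp add: sum.distrib S_def sum_distrib_left)
    finally show ?thesis .
  qed
  have "w \<bullet> (((\<chi> i. (\<chi> k. (if i = k then a else 0) + b)) :: real^'p^'p) *v w)
     = (\<Sum>i\<in>UNIV. a * (w $ i * w $ i) + (b * S) * w $ i)"
    unfolding inner_vec_def e by (simp add: algebra_simps)
  also have "\<dots> = a * (w \<bullet> w) + b * S^2"
    by (simp add: sum.distrib sum_distrib_left[symmetric] inner_vec_def S_def power2_eq_square)
  finally show ?thesis by (simp add: S_def)
qed

lemma var_xi_formula:
  fixes w :: "real^'p"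
  assumes "s \<noteq> 1" "1 + (real CARD('p) - 1) * s \<noteq> 0"
  shows "var_xi w s = 1/(1-s) * (w \<bullet> w) + (- s/((1 - s) * (1 + (real CARD('p) - 1) * s))) * (\<Sum>i\<in>UNIV. w $ i)^2"
proof -
  have "invB s = ((\<chi> i. (\<chi> k. (if i = k then 1/(1-s) else 0) + (- s/((1 - s) * (1 + (real CARD('p) - 1) * s))))) :: real^'p^'p)"
    unfolding invB_def by (simp add: vec_eq_iff)
  then show ?thesis unfolding var_xi_def equicorr_inv[OF assms] by (simp only: qf)
qed


lemma XtX:
  fixes X :: "real^'p^'n" and r :: real
  assumes mean0: "\<forall>i. vmean (column i X) = 0"
    and len1: "\<forall>i. norm (column i X) = 1"
    and corr_r: "\<forall>i k. i \<noteq> k \<longrightarrow> corr (column i X) (column k X) = r"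
  shows "transpose X ** X = equicorr r"
proof -
  have ip: "(transpose X ** X) $ i $ k = column i X \<bullet> column k X" for i k
    by (simp add: matrix_matrix_mult_def transpose_def inner_vec_def column_def)
  have sq: "(\<Sum>l\<in>UNIV. (column i X $ l - vmean (column i X))^2) = 1" for i
  proof -
    have "(\<Sum>l\<in>UNIV. (column i X $ l - vmean (column i X))^2) = column i X \<bullet> column i X"
      using mean0 by (simp add: inner_vec_def power2_eq_square)
    also have "\<dots> = (norm (column i X))^2" by (simp add: power2_norm_eq_inner)
    finally show ?thesis using len1 by simp
  qed
  have off: "column i X \<bullet> column k X = r" if "i \<noteq> k" for i k
  proof -
    have "r = corr (column i X) (column k X)" using corr_r that by simp
    also have "\<dots> = column i X \<bullet> column k X"
      unfolding corr_def sq using mean0 by (simp add: inner_vec_def)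
    finally show ?thesis by simp
  qed
  have dia: "column i X \<bullet> column i X = 1" for i
    using len1 by (simp add: power2_norm_eq_inner[symmetric])
  show ?thesis
    unfolding vec_eq_iff using ip off dia by (simp add: equicorr_def)
qed

lemma r_less_1:
  fixes X :: "real^'p^'n" and r :: real
  assumes "CARD('p) \<ge> 2"
    and indep: "\<forall>b. X *v b = 0 \<longrightarrow> b = 0"
    and len1: "\<forall>i. norm (column i X) = 1"
    and corr_r: "\<forall>i k. i \<noteq> k \<longrightarrow> corr (column i X) (column k X) = r"
    and mean0: "\<forall>i. vmean (column i X) = 0"
  shows "r < 1"
proof -
  obtain i k :: 'p where ik: "i \<noteq> k"
  proof -
    have "\<not> (\<forall>i k :: 'p. i = k)"
    proof
      fix i0 :: 'p
      assume "\<forall>i k :: 'p. i = k"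
      then have "(UNIV :: 'p set) = {i0}" by auto
      then have "card (UNIV :: 'p set) = card {i0}" by (rule arg_cong)
      then have "CARD('p) = 1" by simp
      with assms(1) show False by simp
    qed
    then show ?thesis using that by blast
  qed
  have ip: "column i X \<bullet> column k X = r"
  proof -
    have "column i X \<bullet> column k X = (transpose X ** X) $ i $ k"
      by (simp add: matrix_matrix_mult_def transpose_def inner_vec_def column_def)
    also have "\<dots> = r" using XtX[OF mean0 len1 corr_r] ik by (simp add: equicorr_def)
    finally show ?thesis .
  qed
  have "(axis i 1 - axis k (1::real)) $ i \<noteq> 0"
    using ik by (simp add: axis_def)
  then have "axis i 1 - axis k (1::real) \<noteq> 0" by (auto simp del: vector_minus_component)
  then have ne: "X *v (axis i 1 - axis k 1) \<noteq> 0" using indep by blast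
  have eq: "X *v (axis i 1 - axis k 1) = column i X - column k X"
    by (simp add: matrix_vector_mult_diff_distrib matrix_vector_mult_basis)
  have "0 < (norm (column i X - column k X))^2" using ne eq by simp
  also have "\<dots> = 2 - 2 * r"
  proof -
    have "(norm (column i X - column k X))^2 = column i X \<bullet> column i X + column k X \<bullet> column k X - 2 * (column i X \<bullet> column k X)"
      by (simp add: power2_norm_eq_inner inner_diff_left inner_diff_right inner_commute)
    also have "\<dots> = 2 - 2 * r" using len1 ip by (simp add: power2_norm_eq_inner[symmetric])
    finally show ?thesis .
  qed
  finally show ?thesis by simp
qed


lemma f_formula:
  fixes j :: "'p::finite"
  assumes "0 < s" "s < 1"
  shows "var_xi (axis j (1::real)) s
     = (1 + (real CARD('p) - 2) * s) / ((1 - s) * (1 + (real CARD('p) - 1) * s))"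
proof -
  define q where "q = real CARD('p) - 1"
  have q0: "q \<ge> 0" unfolding q_def by simp
  have n1: "1 - s \<noteq> 0" using assms by simp
  have pos: "1 + q * s > 0" using assms q0 by (simp add: add_pos_nonneg)
  have ax1: "axis j (1::real) \<bullet> axis j 1 = 1" by (simp add: inner_axis_axis)
  have ax2: "(\<Sum>i\<in>UNIV. axis j (1::real) $ i) = 1" by (simp add: axis_def)
  have "var_xi (axis j (1::real)) s = 1/(1-s) + (- s/((1 - s) * (1 + q * s)))"
    using var_xi_formula[of s "axis j (1::real)"] assms pos unfolding q_def ax1 ax2 by simp
  also have "\<dots> = (1 + (q - 1) * s) / ((1 - s) * (1 + q * s))"
  proof -
    have "1/(1-s) = (1 + q * s) / ((1 - s) * (1 + q * s))" using pos by simp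
    then have "1/(1-s) + (- s/((1 - s) * (1 + q * s))) = ((1 + q * s) + (- s)) / ((1 - s) * (1 + q * s))"
      by (simp only: add_divide_distrib minus_divide_left)
    also have "(1 + q * s) + (- s) = 1 + (q - 1) * s" by (simp add: algebra_simps)
    finally show ?thesis .
  qed
  finally show ?thesis unfolding q_def by (simp add: algebra_simps)
qed


theorem corollary1:
  fixes X :: "real^'p^'n" and r :: real and j :: 'p
  assumes "CARD('n) > CARD('p)" and "CARD('p) \<ge> 2"
    and indep: "\<forall>b. X *v b = 0 \<longrightarrow> b = 0"
    and mean0: "\<forall>i. vmean (column i X) = 0"
    and len1: "\<forall>i. norm (column i X) = 1"
    and rpos: "r > 0"
    and corr_r: "\<forall>i k. i \<noteq> k \<longrightarrow> corr (column i X) (column k X) = r"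
  shows "(\<forall>w. var_xi_X X w = var_xi w r)
    \<and> axis j 1 \<in> simplex_W
    \<and> (\<forall>w::real^'p \<in> simplex_W. var_xi w r \<le> var_xi (axis j (1::real)) r)
    \<and> strict_mono_on {0<..<1} (\<lambda>s. var_xi (axis j (1::real)) s)
    \<and> filterlim (\<lambda>s. var_xi (axis j (1::real)) s) at_top (at_left 1)"
proof -
  define q where "q = real CARD('p) - 1"
  have q1: "q \<ge> 1" using assms(2) unfolding q_def by simp
  have r1: "r < 1" using r_less_1[OF assms(2) indep len1 corr_r mean0] .
  have P1: "\<forall>w. var_xi_X X w = var_xi w r"
    unfolding var_xi_X_def var_xi_def XtX[OF mean0 len1 corr_r] by simp
  have P2: "axis j 1 \<in> simplex_W"
    unfolding simplex_W_def by (simp add: axis_def)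
  have P3: "\<forall>w::real^'p \<in> simplex_W. var_xi w r \<le> var_xi (axis j (1::real)) r"
  proof
    fix w :: "real^'p" assume "w \<in> simplex_W"
    then have w0: "\<And>i. w $ i \<ge> 0" and ws: "(\<Sum>i\<in>UNIV. w $ i) = 1"
      unfolding simplex_W_def by auto
    have wle: "w $ i \<le> 1" for i
    proof -
      have "w $ i \<le> (\<Sum>i\<in>UNIV. w $ i)"
        by (rule member_le_sum) (use w0 in auto)
      then show ?thesis using ws by simp
    qed
    have ww: "w \<bullet> w \<le> 1"
    proof -
      have "w \<bullet> w = (\<Sum>i\<in>UNIV. w $ i * w $ i)" by (simp add: inner_vec_def)
      also have "\<dots> \<le> (\<Sum>i\<in>UNIV. w $ i)"
        by (rule sum_mono) (use w0 wle in \<open>simp add: mult_left_le\<close>)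
      finally show ?thesis using ws by simp
    qed
    have c1: "r \<noteq> 1" using r1 by simp
    have c2: "1 + (real CARD('p) - 1) * r \<noteq> 0"
    proof -
      have "0 < q * r" using rpos q1 by simp
      then show ?thesis unfolding q_def by linarith
    qed
    have ax1: "axis j (1::real) \<bullet> axis j 1 = 1" by (simp add: inner_axis_axis)
    have ax2: "(\<Sum>i\<in>UNIV. axis j (1::real) $ i) = 1" by (simp add: axis_def)
    have a0: "1 / (1 - r) > 0" using r1 by simp
    show "var_xi w r \<le> var_xi (axis j (1::real)) r"
      unfolding var_xi_formula[OF c1 c2] ws ax1 ax2
      using mult_left_mono[OF ww less_imp_le[OF a0]] by (simp only: power_one mult_1_right)
  qed
  define N where "N s = 1 + (q - 1) * s" for s :: real
  define D where "D s = (1 - s) * (1 + q * s)" for s :: real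
  have fN: "var_xi (axis j (1::real)) s = N s / D s" if "0 < s" "s < 1" for s
  proof -
    have "real CARD('p) - 2 = q - 1" unfolding q_def by simp
    then show ?thesis using f_formula[OF that, of j] unfolding N_def D_def q_def by simp
  qed
  have Dpos: "D s > 0" if "0 < s" "s < 1" for s
    unfolding D_def using that q1 by (simp add: add_pos_nonneg)
  have P4: "strict_mono_on {0<..<1} (\<lambda>s. var_xi (axis j (1::real)) s)"
  proof (rule strict_mono_onI)
    fix x y :: real assume x: "x \<in> {0<..<1}" and y: "y \<in> {0<..<1}" and xy: "x < y"
    have Dx: "D x > 0" and Dy: "D y > 0" using x y Dpos by auto
    have id: "N y * D x - N x * D y = q * (y - x) * (y + x + (q - 1) * x * y)"
      unfolding N_def D_def by algebra
    have "q * (y - x) * (y + x + (q - 1) * x * y) > 0"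
      using x y xy q1 by (intro mult_pos_pos) (auto intro!: add_pos_nonneg mult_nonneg_nonneg)
    then have "N x * D y < N y * D x" using id by simp
    then have "N x / D x < N y / D y" using Dx Dy by (simp add: field_simps)
    then show "var_xi (axis j (1::real)) x < var_xi (axis j (1::real)) y"
      using fN x y by simp
  qed
  have P5: "filterlim (\<lambda>s. var_xi (axis j (1::real)) s) at_top (at_left 1)"
  proof -
    have ev: "eventually (\<lambda>s. s \<in> {0<..<1}) (at_left (1::real))"
      by (rule eventually_at_left_real) simp
    have "filterlim (\<lambda>s. N s * inverse (D s)) at_top (at_left 1)"
    proof (rule filterlim_tendsto_pos_mult_at_top)
      show "(N \<longlongrightarrow> q) (at_left 1)"
      proof -
        have "(N \<longlongrightarrow> N 1) (at_left 1)" unfolding N_def by (intro tendsto_intros)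
        then show ?thesis unfolding N_def by simp
      qed
      show "0 < q" using q1 by simp
      show "filterlim (\<lambda>s. inverse (D s)) at_top (at_left 1)"
      proof (rule filterlim_inverse_at_top)
        have "(D \<longlongrightarrow> D 1) (at_left 1)" unfolding D_def by (intro tendsto_intros)
        then show "(D \<longlongrightarrow> 0) (at_left 1)" unfolding D_def by simp
        show "eventually (\<lambda>s. 0 < D s) (at_left 1)"
          using ev by (rule eventually_mono) (use Dpos in auto)
      qed
    qed
    moreover have "eventually (\<lambda>s. var_xi (axis j (1::real)) s = N s * inverse (D s)) (at_left 1)"
      using ev by (rule eventually_mono) (use fN in \<open>auto simp: divide_inverse\<close>)
    ultimately show ?thesis by (simp add: filterlim_cong[OF refl refl])
  qed
  show ?thesis using P1 P2 P3 P4 P5 by blast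
qed

end
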